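(* Consider $\dot y=Ay+B(u+\Delta(y,t))$, $y\in\mathbb{R}^{\bar n}$, $u\in\mathbb{R}^{\bar m}$, with constant $A$, full-rank $B\in\mathbb{R}^{\bar n\times\bar m}$, unknown $\Delta$ with $\|\Delta(y,t)\|\le\Delta_M$ for all $y,t$, and $K\in\mathbb{R}^{\bar m\times\bar n}$ such that $A^{cl}=A+BK$ is Hurwitz. Let $S\in\mathbb{R}^{\bar m\times\bar n}$ satisfy $\det(SB)\neq0$ and $Sy=0\Rightarrow SA^{cl}y=0$, let $\mathcal A_\sigma:=SA^{cl}S^\dagger$, and let $P=P^{\mathsf T}\succ0$ be the unique solution of $\mathcal A_\sigma^{\mathsf T}P+P\mathcal A_\sigma=-Q$ for some symmetric positive definite $Q\in\mathbb{R}^{\bar m\times\bar m}$. Then the control $u=Ky+(SB)^{-1}v$ with $\sigma=Sy$ and $$v=-\mu\frac{\sigma}{\|\sigma\|}\ \text{if }\sigma\neq0,\qquad v=0\ \text{if }\sigma=0,$$ where $\mu\ge\frac{1}{\lambda_{\min}(P)}\big[\tfrac12\mu_\star+\lambda_{\max}(P)\|SB\|\Delta_M\big]$ for some $\mu_\star>0$, guarantees that the manifold $\{y: Sy=0\}$ is reached in finite time.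
   Context: $S^\dagger$ is the Moore--Penrose pseudoinverse; $\lambda_{\min}(P),\lambda_{\max}(P)$ denote the smallest and largest eigenvalues of $P$. *)

theory Defs
  imports "HOL-Analysis.Analysis"
begin

text \<open>Moore--Penrose pseudoinverse, defined by the four Penrose conditions
  (which determine it uniquely).\<close>
definition pinv :: "real^'n^'m \<Rightarrow> real^'m^'n" where
  "pinv X = (THE Y. X ** Y ** X = X \<and> Y ** X ** Y = Y \<and>
                    transpose (X ** Y) = X ** Y \<and> transpose (Y ** X) = Y ** X)"

definition symmetric_mat :: "real^'n^'n \<Rightarrow> bool" where
  "symmetric_mat P \<longleftrightarrow> transpose P = P"

definition pos_def :: "real^'n^'n \<Rightarrow> bool" where
  "pos_def P \<longleftrightarrow> (\<forall>x. x \<noteq> 0 \<longrightarrow> x \<bullet> (P *v x) > 0)"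

text \<open>Real eigenvalues; for a symmetric matrix all eigenvalues are real.\<close>
definition real_eigenvalues :: "real^'n^'n \<Rightarrow> real set" where
  "real_eigenvalues P = {l. \<exists>v. v \<noteq> 0 \<and> P *v v = l *\<^sub>R v}"

definition lambda_min :: "real^'n^'n \<Rightarrow> real" where
  "lambda_min P = Min (real_eigenvalues P)"

definition lambda_max :: "real^'n^'n \<Rightarrow> real" where
  "lambda_max P = Max (real_eigenvalues P)"

definition cmat :: "real^'n^'m \<Rightarrow> complex^'n^'m" where
  "cmat A = (\<chi> i j. complex_of_real (A $ i $ j))"

definition hurwitz :: "real^'n^'n \<Rightarrow> bool" where
  "hurwitz A \<longleftrightarrow> (\<forall>(l::complex) v. v \<noteq> 0 \<and> cmat A *v v = l *s v \<longrightarrow> Re l < 0)"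

end

theory Submission
  imports Defs
begin

lemma inner_transpose: "inner x ((A::real^'n^'m) *v y) = inner (transpose A *v x) y"
  by (simp add: dot_lmul_matrix)

lemma sym_inner: "symmetric_mat P \<Longrightarrow> inner x (P *v y) = inner (P *v x) y"
  unfolding symmetric_mat_def by (metis inner_transpose)

lemma psd_zero:
  fixes N :: "real^'n^'n"
  assumes sym: "symmetric_mat N" and psd: "\<forall>x. inner x (N *v x) \<ge> 0"
    and z: "inner x0 (N *v x0) = 0"
  shows "N *v x0 = 0"
proof -
  have key: "inner y (N *v x0) = 0" for y
  proof (rule ccontr)
    define a where "a = inner y (N *v x0)"
    define b where "b = inner y (N *v y)"
    assume "inner y (N *v x0) \<noteq> 0"
    hence a0: "a \<noteq> 0" by (simp add: a_def)
    have b0: "b \<ge> 0" using psd by (simp add: b_def)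
    define t where "t = - a / (b + 1)"
    have "inner (x0 + t *\<^sub>R y) (N *v (x0 + t *\<^sub>R y)) = 2 * t * a + t^2 * b"
    proof -
      have "inner x0 (N *v y) = a" unfolding a_def using sym_inner[OF sym] by (metis inner_commute)
      thus ?thesis using z
        by (simp add: matrix_vector_right_distrib inner_add_left inner_add_right a_def b_def
           power2_eq_square algebra_simps matrix_vector_mult_scaleR)
    qed
    also have "\<dots> = a^2 * (- 2 * (b+1) + b) / (b+1)^2"
    proof -
      have hb: "b + 1 \<noteq> 0" using b0 by linarith
      show ?thesis unfolding t_def using hb
        by (simp add: divide_simps power2_eq_square) (simp add: algebra_simps)
    qed
    also have "\<dots> < 0"
      using a0 b0 by (intro divide_neg_pos mult_pos_neg) auto
    finally show False using psd by (metis not_le)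
  qed
  show ?thesis using key[of "N *v x0"] by simp
qed

lemma eig_min:
  fixes P :: "real^'n^'n"
  assumes sym: "symmetric_mat P"
  shows "\<exists>x0 c. x0 \<noteq> 0 \<and> P *v x0 = c *\<^sub>R x0 \<and> (\<forall>x. c * inner x x \<le> inner x (P *v x))"
proof -
  define f where "f x = inner x (P *v x)" for x :: "real^'n"
  have cont: "continuous_on (sphere 0 1) f"
    unfolding f_def by (intro continuous_intros)
  have ne: "sphere (0::real^'n) 1 \<noteq> {}"
    by (simp add: sphere_def) (metis norm_axis_1)
  obtain x0 where x0: "x0 \<in> sphere 0 1" and mn: "\<forall>y\<in>sphere 0 1. f x0 \<le> f y"
    using continuous_attains_inf[OF compact_sphere ne cont] by blast
  define c where "c = f x0"
  have bound: "c * inner x x \<le> inner x (P *v x)" for x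
  proof (cases "x = 0")
    case True then show ?thesis by simp
  next
    case False
    define u where "u = (1 / norm x) *\<^sub>R x"
    have u: "u \<in> sphere 0 1" using False by (simp add: u_def)
    have xu: "x = norm x *\<^sub>R u" using False by (simp add: u_def)
    have "inner x (P *v x) = (norm x)^2 * f u"
      by (subst (1 2) xu) (simp add: f_def matrix_vector_mult_scaleR power2_eq_square)
    moreover have "inner x x = (norm x)^2" by (simp add: power2_norm_eq_inner)
    moreover have "c \<le> f u" using mn u by (simp add: c_def)
    ultimately show ?thesis by (metis mult.commute mult_right_mono zero_le_power2)
  qed
  define N where "N = P - c *\<^sub>R mat 1"
  have Nx: "N *v x = P *v x - c *\<^sub>R x" for x
    by (simp add: N_def matrix_vector_mult_diff_rdistrib scaleR_matrix_vector_assoc[symmetric])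
  have symN: "symmetric_mat N"
    using sym unfolding symmetric_mat_def N_def
    by (simp add: transpose_def vec_eq_iff mat_def)
  have psd: "\<forall>x. inner x (N *v x) \<ge> 0"
    using bound by (simp add: Nx inner_diff_right)
  have "inner x0 (N *v x0) = 0"
    using x0 by (simp add: Nx inner_diff_right c_def f_def power2_norm_eq_inner[symmetric])
  hence "N *v x0 = 0" by (rule psd_zero[OF symN psd])
  hence "P *v x0 = c *\<^sub>R x0" by (simp add: Nx)
  moreover have "x0 \<noteq> 0" using x0 by auto
  ultimately show ?thesis using bound by blast
qed

lemma neg_mat_vec: "(- (P::real^'n^'m)) *v x = - (P *v x)"
  by (simp add: vec_eq_iff matrix_vector_mult_def sum_negf)

lemma mat_vec_neg: "(P::real^'n^'m) *v (- x) = - (P *v x)"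
  using matrix_vector_mult_diff_distrib[of P 0 x] by simp

lemma eig_max:
  fixes P :: "real^'n^'n"
  assumes sym: "symmetric_mat P"
  shows "\<exists>x0 c. x0 \<noteq> 0 \<and> P *v x0 = c *\<^sub>R x0 \<and> (\<forall>x. inner x (P *v x) \<le> c * inner x x)"
proof -
  have "symmetric_mat (- P)" using sym by (simp add: symmetric_mat_def transpose_def vec_eq_iff)
  then obtain x0 c where "x0 \<noteq> 0" "(- P) *v x0 = c *\<^sub>R x0" "\<forall>x. c * inner x x \<le> inner x ((- P) *v x)"
    using eig_min by blast
  then show ?thesis
  proof (intro exI[of _ x0] exI[of _ "- c"] conjI allI)
    fix x
    show "x0 \<noteq> 0" by fact
    show "P *v x0 = (- c) *\<^sub>R x0" using \<open>(- P) *v x0 = c *\<^sub>R x0\<close>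
      by (simp add: neg_mat_vec) (metis minus_minus scaleR_minus_left)
    show "inner x (P *v x) \<le> (- c) * inner x x" using \<open>\<forall>x. c * inner x x \<le> inner x ((- P) *v x)\<close>
      by (simp add: neg_mat_vec) (metis le_minus_iff)
  qed
qed

lemma finite_eigs:
  fixes P :: "real^'n^'n"
  assumes sym: "symmetric_mat P"
  shows "finite (real_eigenvalues P)"
proof -
  define E where "E = real_eigenvalues P"
  define v where "v l = (SOME v. v \<noteq> 0 \<and> P *v v = l *\<^sub>R v)" for l
  have v: "v l \<noteq> 0 \<and> P *v v l = l *\<^sub>R v l" if "l \<in> E" for l
  proof -
    from that obtain w where "w \<noteq> 0 \<and> P *v w = l *\<^sub>R w" unfolding E_def real_eigenvalues_def by blast
    then show ?thesis unfolding v_def by (rule someI)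
  qed
  have orth: "inner (v l1) (v l2) = 0" if "l1 \<in> E" "l2 \<in> E" "l1 \<noteq> l2" for l1 l2
  proof -
    have "l2 * inner (v l1) (v l2) = inner (v l1) (P *v v l2)" using v[OF that(2)] by simp
    also have "\<dots> = inner (P *v v l1) (v l2)" by (rule sym_inner[OF sym])
    also have "\<dots> = l1 * inner (v l1) (v l2)" using v[OF that(1)] by simp
    finally show ?thesis using that(3) by simp
  qed
  have inj: "inj_on v E"
  proof
    fix l1 l2 assume "l1 \<in> E" "l2 \<in> E" "v l1 = v l2"
    then show "l1 = l2" using orth[of l1 l2] v[of l1] by auto
  qed
  have "pairwise orthogonal (v ` E)"
    unfolding pairwise_def orthogonal_def using orth by auto
  moreover have "0 \<notin> v ` E" using v by auto
  ultimately have "independent (v ` E)" by (rule pairwise_orthogonal_independent)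
  hence "finite (v ` E)" using independent_bound by blast
  thus ?thesis using finite_imageD[OF _ inj] by (simp add: E_def)
qed

lemma lambda_min_facts:
  fixes P :: "real^'n^'n"
  assumes sym: "symmetric_mat P" and pd: "pos_def P"
  shows "0 < lambda_min P" "\<And>x. lambda_min P * inner x x \<le> inner x (P *v x)"
proof -
  obtain x0 c where x0: "x0 \<noteq> 0" "P *v x0 = c *\<^sub>R x0" and b: "\<forall>x. c * inner x x \<le> inner x (P *v x)"
    using eig_min[OF sym] by blast
  have cE: "c \<in> real_eigenvalues P" using x0 unfolding real_eigenvalues_def by blast
  have fin: "finite (real_eigenvalues P)" by (rule finite_eigs[OF sym])
  have "lambda_min P \<in> real_eigenvalues P"
    unfolding lambda_min_def using fin cE by (intro Min_in) auto
  then obtain w where w: "w \<noteq> 0" "P *v w = lambda_min P *\<^sub>R w" unfolding real_eigenvalues_def by blast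
  have "0 < inner w (P *v w)" using pd w(1) unfolding pos_def_def by blast
  also have "\<dots> = lambda_min P * inner w w" using w(2) by simp
  finally show "0 < lambda_min P" using w(1) inner_ge_zero[of w] by (auto simp: zero_less_mult_iff)
  have "lambda_min P \<le> c" unfolding lambda_min_def using fin cE by simp
  thus "lambda_min P * inner x x \<le> inner x (P *v x)" for x
    using b by (meson inner_ge_zero mult_right_mono order_trans)
qed

lemma lambda_max_facts:
  fixes P :: "real^'n^'n"
  assumes sym: "symmetric_mat P" and pd: "pos_def P"
  shows "0 < lambda_max P" "\<And>x. inner x (P *v x) \<le> lambda_max P * inner x x"
proof -
  obtain x0 c where x0: "x0 \<noteq> 0" "P *v x0 = c *\<^sub>R x0" and b: "\<forall>x. inner x (P *v x) \<le> c * inner x x"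
    using eig_max[OF sym] by blast
  have cE: "c \<in> real_eigenvalues P" using x0 unfolding real_eigenvalues_def by blast
  have fin: "finite (real_eigenvalues P)" by (rule finite_eigs[OF sym])
  have le: "c \<le> lambda_max P" unfolding lambda_max_def using fin cE by simp
  have "0 < inner x0 (P *v x0)" using pd x0(1) unfolding pos_def_def by blast
  also have "\<dots> = c * inner x0 x0" using x0(2) by simp
  finally have "0 < c" using x0(1) inner_ge_zero[of x0] by (auto simp: zero_less_mult_iff)
  thus "0 < lambda_max P" using le by simp
  show "inner x (P *v x) \<le> lambda_max P * inner x x" for x
    using b le by (meson inner_ge_zero mult_right_mono order_trans)
qed

lemma quad_bound:
  fixes P :: "real^'n^'n"
  assumes sym: "symmetric_mat P" and psd: "\<forall>x. 0 \<le> inner x (P *v x)"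
    and ub: "\<forall>x. inner x (P *v x) \<le> M * inner x x"
  shows "inner a (P *v b) \<le> M * norm a * norm b"
proof (cases "a = 0 \<or> b = 0")
  case True then show ?thesis by auto
next
  case False
  define a' where "a' = (1 / norm a) *\<^sub>R a"
  define b' where "b' = (1 / norm b) *\<^sub>R b"
  have na: "norm a' = 1" and nb: "norm b' = 1" using False by (auto simp: a'_def b'_def)
  have M0: "0 \<le> M" using psd[rule_format, of a'] ub[rule_format, of a'] na
    by (simp add: power2_norm_eq_inner[symmetric])
  have sy: "inner b' (P *v a') = inner a' (P *v b')"
    using sym_inner[OF sym] by (metis inner_commute)
  have "4 * inner a' (P *v b') = inner (a' + b') (P *v (a' + b')) - inner (a' - b') (P *v (a' - b'))"
    using sy by (simp add: matrix_vector_right_distrib matrix_vector_mult_diff_distrib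
        inner_add_left inner_add_right inner_diff_left inner_diff_right)
  also have "\<dots> \<le> M * inner (a' + b') (a' + b')"
  proof -
    have "inner (a' + b') (P *v (a' + b')) \<le> M * inner (a' + b') (a' + b')" using ub by blast
    moreover have "0 \<le> inner (a' - b') (P *v (a' - b'))" using psd by blast
    ultimately show ?thesis by linarith
  qed
  also have "inner (a' + b') (a' + b') \<le> 4"
  proof -
    have "norm (a' + b') \<le> 2" using norm_triangle_ineq[of a' b'] na nb by simp
    hence "(norm (a' + b'))^2 \<le> 2^2" by (intro power_mono) auto
    thus ?thesis by (simp add: power2_norm_eq_inner)
  qed
  hence "M * inner (a' + b') (a' + b') \<le> M * 4" using M0 by (rule mult_left_mono)
  finally have "inner a' (P *v b') \<le> M" by simp
  moreover have "inner a (P *v b) = norm a * norm b * inner a' (P *v b')"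
    using False by (simp add: a'_def b'_def matrix_vector_mult_scaleR)
  ultimately show ?thesis
  proof -
    assume h1: "inner a' (P *v b') \<le> M" and h2: "inner a (P *v b) = norm a * norm b * inner a' (P *v b')"
    have "norm a * norm b * inner a' (P *v b') \<le> norm a * norm b * M"
      using h1 by (intro mult_left_mono) auto
    thus ?thesis using h2 by (simp add: mult_ac)
  qed
qed


definition penrose :: "real^'n^'m \<Rightarrow> real^'m^'n \<Rightarrow> bool" where
  "penrose X Y \<longleftrightarrow> X ** Y ** X = X \<and> Y ** X ** Y = Y \<and>
                    transpose (X ** Y) = X ** Y \<and> transpose (Y ** X) = Y ** X"

lemma penrose_unique:
  assumes p1: "penrose X Y1" and p2: "penrose X Y2"
  shows "Y1 = Y2"
proof -
  have a1: "X ** Y1 ** X = X" "Y1 ** X ** Y1 = Y1" "transpose (X ** Y1) = X ** Y1" "transpose (Y1 ** X) = Y1 ** X"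
    using p1 by (auto simp: penrose_def)
  have a2: "X ** Y2 ** X = X" "Y2 ** X ** Y2 = Y2" "transpose (X ** Y2) = X ** Y2" "transpose (Y2 ** X) = Y2 ** X"
    using p2 by (auto simp: penrose_def)
  have e1: "Y1 = Y1 ** X ** Y2"
  proof -
    have "Y1 = Y1 ** transpose (X ** Y1)" using a1 by (simp add: matrix_mul_assoc)
    also have "\<dots> = Y1 ** transpose Y1 ** transpose X" by (simp add: matrix_transpose_mul matrix_mul_assoc)
    also have "transpose X = transpose (X ** Y2 ** X)" using a2 by simp
    also have "\<dots> = transpose X ** transpose (X ** Y2)" by (simp add: matrix_transpose_mul matrix_mul_assoc)
    also have "Y1 ** transpose Y1 ** (transpose X ** transpose (X ** Y2)) = Y1 ** transpose (X ** Y1) ** transpose (X ** Y2)"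
      by (simp add: matrix_transpose_mul matrix_mul_assoc)
    also have "\<dots> = Y1 ** X ** Y1 ** X ** Y2" using a1 a2 by (simp add: matrix_mul_assoc)
    also have "\<dots> = Y1 ** X ** Y2" using a1 by (simp add: matrix_mul_assoc)
    finally show ?thesis .
  qed
  have e2: "Y2 = Y1 ** X ** Y2"
  proof -
    have "Y2 = transpose (Y2 ** X) ** Y2" using a2 by (simp add: matrix_mul_assoc)
    also have "\<dots> = transpose X ** transpose Y2 ** Y2" by (simp add: matrix_transpose_mul matrix_mul_assoc)
    also have "transpose X = transpose (X ** Y1 ** X)" using a1 by simp
    also have "\<dots> = transpose (Y1 ** X) ** transpose X" by (simp add: matrix_transpose_mul matrix_mul_assoc)
    also have "transpose (Y1 ** X) ** transpose X ** transpose Y2 ** Y2 = transpose (Y1 ** X) ** transpose (Y2 ** X) ** Y2"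
      by (simp add: matrix_transpose_mul matrix_mul_assoc)
    also have "\<dots> = Y1 ** X ** Y2 ** X ** Y2" using a1 a2 by (simp add: matrix_mul_assoc)
    also have "\<dots> = Y1 ** X ** Y2" using a2 by (metis matrix_mul_assoc)
    finally show ?thesis .
  qed
  show ?thesis using e1 e2 by simp
qed

lemma penrose_exists:
  fixes S :: "real^'n^'m"
  assumes R: "S ** R = mat 1"
  shows "\<exists>Y. penrose S Y"
proof -
  define M where "M = S ** transpose S"
  have Msym: "transpose M = M" by (simp add: M_def matrix_transpose_mul)
  have RT: "transpose R ** transpose S = mat 1"
    using R by (metis matrix_transpose_mul transpose_mat)
  have ker: "\<forall>z. M *v z = 0 \<longrightarrow> z = 0"
  proof (intro allI impI)
    fix z assume "M *v z = 0"
    hence "S *v (transpose S *v z) = 0" by (metis M_def matrix_vector_mul_assoc)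
    hence "inner z (S *v (transpose S *v z)) = 0" by simp
    hence "inner (transpose S *v z) (transpose S *v z) = 0" by (metis inner_transpose)
    hence "transpose S *v z = 0" by simp
    hence "transpose R *v (transpose S *v z) = 0" by simp
    thus "z = 0" using RT by (metis matrix_vector_mul_assoc matrix_vector_mul_lid)
  qed
  obtain G where GM: "G ** M = mat 1" using ker matrix_left_invertible_ker by blast
  have MG: "M ** G = mat 1" using GM matrix_left_right_inverse by blast
  have Gsym: "transpose G = G"
  proof -
    have "transpose G ** M = mat 1"
      using MG Msym by (metis matrix_transpose_mul transpose_mat)
    hence "transpose G = transpose G ** (M ** G)" using MG by simp
    also have "\<dots> = G" using \<open>transpose G ** M = mat 1\<close> by (metis matrix_mul_assoc matrix_mul_lid)
    finally show ?thesis .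
  qed
  define Y where "Y = transpose S ** G"
  have SY: "S ** Y = mat 1" using MG by (simp add: Y_def M_def matrix_mul_assoc)
  have "penrose S Y"
    unfolding penrose_def
  proof (intro conjI)
    show "S ** Y ** S = S" using SY by simp
    show "Y ** S ** Y = Y" using SY by (metis matrix_mul_assoc matrix_mul_rid)
    show "transpose (S ** Y) = S ** Y" using SY by simp
    show "transpose (Y ** S) = Y ** S"
      using Gsym by (simp add: Y_def matrix_transpose_mul matrix_mul_assoc)
  qed
  thus ?thesis by blast
qed

lemma pinv_prop:
  fixes S :: "real^'n^'m"
  assumes R: "S ** R = mat 1"
  shows "S ** pinv S ** S = S"
proof -
  obtain Y where Y: "penrose S Y" using penrose_exists[OF R] by blast
  have "penrose S (pinv S)"
    unfolding pinv_def penrose_def[symmetric]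
    by (rule theI[of "penrose S", OF Y]) (rule penrose_unique[OF _ Y])
  thus ?thesis by (simp add: penrose_def)
qed


lemma finite_time:
  fixes W :: "real \<Rightarrow> real"
  assumes c: "c > 0" and der: "\<And>t. t > t0 \<Longrightarrow> \<exists>d. (W has_real_derivative d) (at t) \<and> d \<le> - c"
    and nn: "\<And>t. t > t0 \<Longrightarrow> W t \<ge> 0"
  shows False
proof -
  define t1 where "t1 = t0 + 1"
  define T where "T = t1 + W t1 / c + 1"
  have "W t1 \<ge> 0" using nn t1_def by simp
  hence tT: "t1 \<le> T" using c by (simp add: T_def)
  define g where "g t = W t + c * t" for t
  have "g T \<le> g t1"
  proof (rule DERIV_nonpos_imp_nonincreasing[OF tT])
    fix x assume "t1 \<le> x" "x \<le> T"
    hence "x > t0" by (simp add: t1_def)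
    then obtain d where d: "(W has_real_derivative d) (at x)" "d \<le> -c" using der by blast
    have "(g has_real_derivative d + c) (at x)" unfolding g_def
      by (auto intro!: derivative_eq_intros d)
    thus "\<exists>y. DERIV g x :> y \<and> y \<le> 0" using d(2) by auto
  qed
  hence "W T \<le> W t1 - c * (T - t1)" by (simp add: g_def algebra_simps)
  also have "\<dots> = - c" using c by (simp add: T_def field_simps)
  finally have "W T < 0" using c by simp
  moreover have "T > t0" using tT t1_def by simp
  ultimately show False using nn by force
qed

theorem proposition1:
  fixes A :: "real^'n^'n" and B :: "real^'m^'n" and K S :: "real^'n^'m"
    and Delta :: "real^'n \<Rightarrow> real \<Rightarrow> real^'m" and DeltaM :: real
    and P Q :: "real^'m^'m" and mu mu_star :: real
    and y :: "real \<Rightarrow> real^'n" and t0 :: real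
  assumes B_full_rank: "rank B = min CARD('n) CARD('m)"
    and Delta_bound: "\<forall>x t. norm (Delta x t) \<le> DeltaM"
    and Acl_hurwitz: "hurwitz (A + B ** K)"
    and SB_inv: "det (S ** B) \<noteq> 0"
    and S_inv: "\<forall>x. S *v x = 0 \<longrightarrow> (S ** (A + B ** K)) *v x = 0"
    and Q_sym: "symmetric_mat Q" and Q_pd: "pos_def Q"
    and P_sym: "symmetric_mat P" and P_pd: "pos_def P"
    and P_lyap: "transpose (S ** (A + B ** K) ** pinv S) ** P + P ** (S ** (A + B ** K) ** pinv S) = - Q"
    and P_unique: "\<forall>P'. transpose (S ** (A + B ** K) ** pinv S) ** P' + P' ** (S ** (A + B ** K) ** pinv S) = - Q \<longrightarrow> P' = P"
    and mu_star_pos: "mu_star > 0"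
    and mu_ge: "mu \<ge> (1 / lambda_min P) * (mu_star / 2 + lambda_max P * onorm ((*v) (S ** B)) * DeltaM)"
    and sol: "\<forall>t\<ge>t0. (\<forall>s\<in>{t0..t}. S *v y s \<noteq> 0) \<longrightarrow>
       (y has_vector_derivative
          (A *v y t + B *v (K *v y t
              + matrix_inv (S ** B) *v (if S *v y t = 0 then 0 else - (mu / norm (S *v y t)) *\<^sub>R (S *v y t))
              + Delta (y t) t)))
        (at t within {t0..})"
  shows "\<exists>T\<ge>t0. S *v y T = 0"
  proof (rule ccontr)
  assume "\<not> (\<exists>T\<ge>t0. S *v y T = 0)"
  hence nz: "\<And>t. t \<ge> t0 \<Longrightarrow> S *v y t \<noteq> 0" by auto
  define Acl where "Acl = A + B ** K"
  define As where "As = S ** Acl ** pinv S"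
  define C where "C = S ** B"
  define Ci where "Ci = matrix_inv C"
  define lmin where "lmin = lambda_min P"
  define lmax where "lmax = lambda_max P"
  define nC where "nC = onorm ((*v) C)"
  have invC: "C ** Ci = mat 1"
  proof -
    have "invertible C" using SB_inv invertible_det_nz C_def by auto
    hence "\<exists>A'. C ** A' = mat 1 \<and> A' ** C = mat 1" by (simp add: invertible_def)
    hence "C ** Ci = mat 1 \<and> Ci ** C = mat 1" unfolding Ci_def matrix_inv_def by (rule someI_ex)
    thus ?thesis by simp
  qed
  have "S ** (B ** Ci) = mat 1" using invC unfolding C_def by (metis matrix_mul_assoc)
  hence pS: "S ** pinv S ** S = S" by (rule pinv_prop)
  have pS': "S ** (pinv S ** S) = S" using pS by (metis matrix_mul_assoc)
  have key1: "S *v (Acl *v x) = As *v (S *v x)" for x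
  proof -
    define w where "w = x - pinv S *v (S *v x)"
    have "S *v (pinv S *v (S *v x)) = S *v x" using pS' by (metis matrix_vector_mul_assoc)
    hence "S *v w = 0" unfolding w_def by (simp add: matrix_vector_mult_diff_distrib)
    hence "(S ** Acl) *v w = 0" using S_inv Acl_def by simp
    hence "S *v (Acl *v w) = 0" by (metis matrix_vector_mul_assoc)
    hence "S *v (Acl *v x) = S *v (Acl *v (pinv S *v (S *v x)))"
      unfolding w_def by (simp add: matrix_vector_mult_diff_distrib)
    also have "\<dots> = As *v (S *v x)" unfolding As_def by (metis matrix_vector_mul_assoc)
    finally show ?thesis .
  qed
  note sol' = sol[folded C_def, folded Ci_def]
  have lmin_pos: "0 < lmin" and lmin_le: "\<And>x. lmin * inner x x \<le> inner x (P *v x)"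
    using lambda_min_facts[OF P_sym P_pd] by (auto simp: lmin_def)
  have lmax_pos: "0 < lmax" and lmax_ge: "\<And>x. inner x (P *v x) \<le> lmax * inner x x"
    using lambda_max_facts[OF P_sym P_pd] by (auto simp: lmax_def)
  have DM: "0 \<le> DeltaM" using Delta_bound by (meson norm_ge_zero order_trans)
  have nC: "0 \<le> nC" unfolding nC_def by (rule onorm_pos_le) simp
  have mul: "mu * lmin \<ge> mu_star / 2 + lmax * nC * DeltaM"
    using mu_ge lmin_pos by (simp add: lmin_def lmax_def nC_def C_def field_simps)
  have mu_pos: "mu > 0"
  proof -
    have "0 \<le> lmax * nC * DeltaM" using lmax_pos nC DM by simp
    hence "0 < mu * lmin" using mul mu_star_pos by linarith
    thus ?thesis using lmin_pos by (simp add: zero_less_mult_iff)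
  qed
  have Ppsd: "\<forall>x. 0 \<le> inner x (P *v x)"
    using P_pd unfolding pos_def_def by (metis inner_zero_left less_eq_real_def matrix_vector_mult_0_right)
  have Qpsd: "0 \<le> inner x (Q *v x)" for x
    using Q_pd unfolding pos_def_def by (metis inner_zero_left less_eq_real_def matrix_vector_mult_0_right)
  define c where "c = mu_star / (2 * sqrt lmax)"
  have c_pos: "c > 0" using mu_star_pos lmax_pos by (simp add: c_def)
  define W where "W t = sqrt (inner (S *v y t) (P *v (S *v y t)))" for t
  show False
  proof (rule finite_time[OF c_pos, of t0 W])
    fix t assume "t > t0"
    show "W t \<ge> 0" using Ppsd by (simp add: W_def)
  next
    fix t assume tt0: "t > t0"
    define sg where "sg = S *v y t"
    have sg0: "sg \<noteq> 0" using nz tt0 by (simp add: sg_def)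
    define vv where "vv = - (mu / norm sg) *\<^sub>R sg"
    define yd where "yd = A *v y t + B *v (K *v y t + Ci *v vv + Delta (y t) t)"
    have "(y has_vector_derivative yd) (at t within {t0..})"
      using sol'[rule_format, of t] tt0 nz sg0 by (simp add: yd_def vv_def sg_def)
    hence "(y has_vector_derivative yd) (at t within {t0<..})"
      by (rule has_vector_derivative_within_subset) auto
    moreover have "t \<in> {t0<..}" using tt0 by simp
    ultimately have yd': "(y has_vector_derivative yd) (at t)"
      using has_vector_derivative_within_open[of t "{t0<..}" y yd] open_greaterThan by blast
    define sd where "sd = S *v yd"
    have sd: "sd = As *v sg + vv + C *v Delta (y t) t"
    proof -
      have "sd = S *v (Acl *v y t) + (S ** (B ** Ci)) *v vv + (S ** B) *v Delta (y t) t"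
        unfolding sd_def yd_def Acl_def
        by (simp add: matrix_vector_right_distrib matrix_vector_mult_add_rdistrib matrix_vector_mul_assoc)
      also have "(S ** (B ** Ci)) = mat 1" using invC unfolding C_def by (metis matrix_mul_assoc)
      finally show ?thesis by (simp add: key1 sg_def C_def)
    qed
    have d1: "((\<lambda>t. S *v y t) has_vector_derivative sd) (at t)"
      unfolding sd_def by (rule bounded_linear.has_vector_derivative[OF matrix_vector_mul_bounded_linear yd'])
    have d2: "((\<lambda>t. P *v (S *v y t)) has_vector_derivative P *v sd) (at t)"
      by (rule bounded_linear.has_vector_derivative[OF matrix_vector_mul_bounded_linear d1])
    have d3: "((\<lambda>t. inner (S *v y t) (P *v (S *v y t))) has_vector_derivative
        inner sg (P *v sd) + inner sd (P *v sg)) (at t)"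
      using bounded_bilinear.has_vector_derivative[OF bounded_bilinear_inner d1 d2] by (simp add: sg_def)
    define D where "D = inner sg (P *v sd) + inner sd (P *v sg)"
    have D2: "D = 2 * inner sg (P *v sd)"
      unfolding D_def using sym_inner[OF P_sym, of sd sg] by (simp add: inner_commute)
    have lyap: "2 * inner sg (P *v (As *v sg)) = - inner sg (Q *v sg)"
    proof -
      have "(transpose As ** P + P ** As) *v sg = - Q *v sg"
        using P_lyap by (simp add: As_def Acl_def)
      hence "inner sg ((transpose As ** P + P ** As) *v sg) = inner sg (- Q *v sg)" by simp
      hence "inner sg (transpose As *v (P *v sg)) + inner sg (P *v (As *v sg)) = - inner sg (Q *v sg)"
        by (simp add: matrix_vector_mult_add_rdistrib inner_add_right matrix_vector_mul_assoc neg_mat_vec)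
      moreover have "inner sg (transpose As *v (P *v sg)) = inner sg (P *v (As *v sg))"
        using inner_transpose[of sg "transpose As" "P *v sg"] sym_inner[OF P_sym, of sg "As *v sg"]
        by (simp add: inner_commute)
      ultimately show ?thesis by simp
    qed
    have nsg: "0 < norm sg" using sg0 by simp
    have b1: "inner sg (P *v vv) \<le> - mu * lmin * norm sg"
    proof -
      have "inner sg (P *v vv) = - (mu / norm sg) * inner sg (P *v sg)"
        by (simp add: vv_def matrix_vector_mult_scaleR mat_vec_neg)
      also have "\<dots> \<le> - (mu / norm sg) * (lmin * inner sg sg)"
      proof -
        have k: "0 \<le> mu / norm sg" using mu_pos nsg by simp
        show ?thesis using mult_left_mono[OF lmin_le[of sg] k] by linarith
      qed
      also have "\<dots> = - mu * lmin * norm sg"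
        using nsg by (simp add: power2_norm_eq_inner[symmetric] power2_eq_square field_simps)
      finally show ?thesis .
    qed
    have b2: "inner sg (P *v (C *v Delta (y t) t)) \<le> lmax * nC * DeltaM * norm sg"
    proof -
      have "inner sg (P *v (C *v Delta (y t) t)) \<le> lmax * norm sg * norm (C *v Delta (y t) t)"
        by (rule quad_bound[OF P_sym Ppsd]) (use lmax_ge in blast)
      also have "norm (C *v Delta (y t) t) \<le> nC * DeltaM"
      proof -
        have "norm (C *v Delta (y t) t) \<le> nC * norm (Delta (y t) t)"
          unfolding nC_def by (rule onorm) simp
        also have "\<dots> \<le> nC * DeltaM" using Delta_bound nC by (simp add: mult_left_mono)
        finally show ?thesis .
      qed
      hence "lmax * norm sg * norm (C *v Delta (y t) t) \<le> lmax * norm sg * (nC * DeltaM)"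
        using lmax_pos by (simp add: mult_left_mono)
      finally show ?thesis by (simp add: mult_ac)
    qed
    have Dle: "D \<le> - mu_star * norm sg"
    proof -
      have "D = 2 * inner sg (P *v (As *v sg)) + 2 * inner sg (P *v vv) + 2 * inner sg (P *v (C *v Delta (y t) t))"
        unfolding D2 sd by (simp add: matrix_vector_right_distrib inner_add_right algebra_simps)
      also have "\<dots> \<le> 0 + 2 * (- mu * lmin * norm sg) + 2 * (lmax * nC * DeltaM * norm sg)"
        using lyap Qpsd[of sg] b1 b2 by linarith
      also have "\<dots> = - 2 * norm sg * (mu * lmin - lmax * nC * DeltaM)" by (simp add: algebra_simps)
      also have "\<dots> \<le> - 2 * norm sg * (mu_star / 2)"
        using mul nsg by (intro mult_left_mono_neg) auto
      finally show ?thesis by (simp add: mult.commute)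
    qed
    define V where "V = inner sg (P *v sg)"
    have Vpos: "0 < V" using P_pd sg0 by (simp add: pos_def_def V_def)
    have Vle: "V \<le> lmax * (norm sg)^2" using lmax_ge[of sg] by (simp add: V_def power2_norm_eq_inner)
    have dV: "((\<lambda>t. inner (S *v y t) (P *v (S *v y t))) has_real_derivative D) (at t)"
      using d3 by (simp add: has_real_derivative_iff_has_vector_derivative D_def)
    have dW: "(W has_real_derivative inverse (sqrt V) / 2 * D) (at t)"
      unfolding W_def using DERIV_chain'[OF dV DERIV_real_sqrt[OF Vpos[unfolded V_def sg_def]]]
      by (simp add: V_def sg_def)
    have "inverse (sqrt V) / 2 * D \<le> - c"
    proof -
      have sV: "0 < sqrt V" using Vpos by simp
      have sVle: "sqrt V \<le> sqrt lmax * norm sg"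
        using real_sqrt_le_mono[OF Vle] by (simp add: real_sqrt_mult)
      have "inverse (sqrt V) / 2 * D \<le> inverse (sqrt V) / 2 * (- mu_star * norm sg)"
        using Dle sV by (intro mult_left_mono) auto
      also have "\<dots> = - (mu_star / 2) * (norm sg / sqrt V)" by (simp add: field_simps)
      also have "\<dots> \<le> - (mu_star / 2) * (1 / sqrt lmax)"
      proof -
        have "1 / sqrt lmax \<le> norm sg / sqrt V"
          using sVle sV lmax_pos by (simp add: divide_simps mult.commute)
        thus ?thesis using mu_star_pos by (intro mult_left_mono_neg) auto
      qed
      also have "\<dots> = - c" by (simp add: c_def)
      finally show ?thesis .
    qed
    thus "\<exists>d. (W has_real_derivative d) (at t) \<and> d \<le> - c" using dW by blast
  qed
qed

end
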